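(* The matrix $U=\frac{1}{\sqrt2}\left(S_0\otimes I_2\otimes I_2+S_1\otimes\sigma_3\otimes\sigma_3+S_2\otimes\sigma_1\otimes\sigma_1+S_3\otimes\sigma_2\otimes\sigma_2\right)$ on $\mathbb{C}^2\otimes\mathbb{C}^2\otimes\mathbb{C}^2$ has $\mathrm{sr}(U)=4$.
   Context: $S_0=\begin{bmatrix}1&0\\0&0\end{bmatrix}$, $S_1=\begin{bmatrix}0&1\\0&0\end{bmatrix}$, $S_2=\begin{bmatrix}0&0\\1&0\end{bmatrix}$, $S_3=\begin{bmatrix}0&0\\0&1\end{bmatrix}$. $I_2$ is the $2\times2$ identity and $\sigma_1=\begin{bmatrix}0&1\\1&0\end{bmatrix}$, $\sigma_2=\begin{bmatrix}0&-i\\i&0\end{bmatrix}$, $\sigma_3=\begin{bmatrix}1&0\\0&-1\end{bmatrix}$ are the Pauli matrices. For a matrix $U$ on $\mathbb{C}^2\otimes\mathbb{C}^2\otimes\mathbb{C}^2$ (systems $A,B,C$), its Schmidt rank $\mathrm{sr}(U)$ is the least integer $r$ such that $U=\sum_{j=1}^r A_j\otimes B_j\otimes C_j$ with $A_j,B_j,C_j$ complex $2\times 2$ matrices (i.e. the tensor rank of $U$). *)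

theory Defs
  imports "HOL-Analysis.Analysis"
begin

text \<open>Complex 2x2 matrices; rows/columns indexed by the two-element type 2
  (entry in row r, column c is A $ r $ c; built with vector literals, indices 1 and 2).\<close>
type_synonym cmat2 = "complex ^ 2 ^ 2"

text \<open>Matrices on C^2 (x) C^2 (x) C^2, with rows and columns indexed by
  triples (a,b,c) of basis indices of systems A, B, C.\<close>
type_synonym cmat8 = "(2 \<times> 2 \<times> 2) \<Rightarrow> (2 \<times> 2 \<times> 2) \<Rightarrow> complex"

definition mat2 :: "complex \<Rightarrow> complex \<Rightarrow> complex \<Rightarrow> complex \<Rightarrow> cmat2" where
  "mat2 a b c d = vector [vector [a, b], vector [c, d]]"

definition S0 :: cmat2 where "S0 = mat2 1 0 0 0"
definition S1 :: cmat2 where "S1 = mat2 0 1 0 0"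
definition S2 :: cmat2 where "S2 = mat2 0 0 1 0"
definition S3 :: cmat2 where "S3 = mat2 0 0 0 1"
definition I2 :: cmat2 where "I2 = mat2 1 0 0 1"
definition sigma1 :: cmat2 where "sigma1 = mat2 0 1 1 0"
definition sigma2 :: cmat2 where "sigma2 = mat2 0 (- \<i>) \<i> 0"
definition sigma3 :: cmat2 where "sigma3 = mat2 1 0 0 (-1)"

definition tensor3 :: "cmat2 \<Rightarrow> cmat2 \<Rightarrow> cmat2 \<Rightarrow> cmat8" where
  "tensor3 A B C = (\<lambda>(i1, i2, i3) (j1, j2, j3). A $ i1 $ j1 * B $ i2 $ j2 * C $ i3 $ j3)"

definition schmidt_rank :: "cmat8 \<Rightarrow> nat" where
  "schmidt_rank U = (LEAST r. \<exists>A B C :: nat \<Rightarrow> cmat2.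
      \<forall>x y. U x y = (\<Sum>j<r. tensor3 (A j) (B j) (C j) x y))"

definition Umat :: cmat8 where
  "Umat = (\<lambda>x y. complex_of_real (1 / sqrt 2) *
     (tensor3 S0 I2 I2 x y + tensor3 S1 sigma3 sigma3 x y
      + tensor3 S2 sigma1 sigma1 x y + tensor3 S3 sigma2 sigma2 x y))"

end

theory Submission
  imports Defs
begin

lemma no_rank3:
  fixes a :: "4 \<Rightarrow> nat \<Rightarrow> complex" and w :: "nat \<Rightarrow> 4 \<Rightarrow> complex" and Q :: "complex^4^4"
  assumes h: "\<And>k l. (\<Sum>m\<in>UNIV. (\<Sum>j<3. a k j * w j m) * Q$m$l) = (if k = l then 1 else 0)"
  shows False
proof -
  define idx :: "4 \<Rightarrow> nat" where "idx j = (if j = 1 then 0 else if j = 2 then 1 else 2)" for j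
  define AA :: "complex^4^4" where "AA = (\<chi> k j. if j = 4 then 0 else a k (idx j))"
  define WW :: "complex^4^4" where "WW = (\<chi> j m. if j = 4 then 0 else w (idx j) m)"
  have e: "(AA ** WW) $ k $ m = (\<Sum>j<3. a k j * w j m)" for k m
    by (simp add: matrix_matrix_mult_def AA_def WW_def sum_4 idx_def numeral_3_eq_3 numeral_2_eq_2 lessThan_Suc add.commute add.left_commute)
  have p: "((AA ** WW) ** Q) $ k $ l = (if k = l then 1 else 0)" for k l
    unfolding matrix_matrix_mult_def[of "AA ** WW" Q] by (simp add: e h)
  have "(AA ** WW) ** Q = mat 1"
    by (simp add: vec_eq_iff mat_def p)
  hence "det (AA ** WW ** Q) = 1" by simp
  moreover have "det AA = 0"
    by (rule det_zero_column(1)[of 4]) (simp add: column_def AA_def vec_eq_iff)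
  ultimately show False by (simp add: det_mul)
qed

lemma upper: "\<exists>A B C :: nat \<Rightarrow> cmat2.
      \<forall>x y. Umat x y = (\<Sum>j<4. tensor3 (A j) (B j) (C j) x y)"
proof -
  define c where "c = complex_of_real (1 / sqrt 2)"
  define A :: "nat \<Rightarrow> cmat2" where "A j = (\<chi> p q. c * ([S0,S1,S2,S3] ! j) $ p $ q)" for j
  define B :: "nat \<Rightarrow> cmat2" where "B j = [I2,sigma3,sigma1,sigma2] ! j" for j
  show ?thesis
    apply (rule exI[of _ A], rule exI[of _ B], rule exI[of _ B])
    apply (clarsimp simp: Umat_def tensor3_def A_def B_def c_def numeral_3_eq_3 numeral_2_eq_2 eval_nat_numeral lessThan_Suc split: prod.splits)
    apply (simp add: add_divide_distrib)
    done
qed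

theorem mainTheorem7:
  shows "schmidt_rank Umat = 4"
  unfolding schmidt_rank_def
proof (rule Least_equality)
  show "\<exists>A B C :: nat \<Rightarrow> cmat2. \<forall>x y. Umat x y = (\<Sum>j<4. tensor3 (A j) (B j) (C j) x y)"
    by (rule upper)
next
  fix r
  assume "\<exists>A B C :: nat \<Rightarrow> cmat2. \<forall>x y. Umat x y = (\<Sum>j<r. tensor3 (A j) (B j) (C j) x y)"
  then obtain A B C :: "nat \<Rightarrow> cmat2" where dec: "\<And>x y. Umat x y = (\<Sum>j<r. tensor3 (A j) (B j) (C j) x y)"
    by blast
  show "4 \<le> r"
  proof (rule ccontr)
    assume "\<not> 4 \<le> r"
    hence r3: "r \<le> 3" by simp
    define A' where "A' j = (if j < r then A j else 0)" for j
    have dec3: "Umat x y = (\<Sum>j<3. tensor3 (A' j) (B j) (C j) x y)" for x y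
    proof -
      have "(\<Sum>j<3. tensor3 (A' j) (B j) (C j) x y)
          = (\<Sum>j<3. if j < r then tensor3 (A j) (B j) (C j) x y else 0)"
        by (rule sum.cong) (auto simp: A'_def tensor3_def split: prod.splits)
      also have "\<dots> = (\<Sum>j\<in>{j\<in>{..<3}. j < r}. tensor3 (A j) (B j) (C j) x y)"
        by (rule sum.inter_filter[symmetric]) simp
      also have "{j\<in>{..<3}. j < r} = {..<r}" using r3 by auto
      finally show ?thesis using dec by simp
    qed
    define ia :: "4 \<Rightarrow> 2" where "ia k = (if k = 1 \<or> k = 2 then 1 else 2)" for k
    define ja :: "4 \<Rightarrow> 2" where "ja k = (if k = 1 \<or> k = 3 then 1 else 2)" for k
    define ib :: "4 \<Rightarrow> 2" where "ib m = 1" for m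
    define jb :: "4 \<Rightarrow> 2" where "jb m = (if m = 1 \<or> m = 2 then 1 else 2)" for m
    define ic :: "4 \<Rightarrow> 2" where "ic m = (if m = 1 \<or> m = 3 then 1 else 2)" for m
    define jc :: "4 \<Rightarrow> 2" where "jc m = (if m = 1 \<or> m = 4 then 1 else 2)" for m
    define a where "a k j = A' j $ ia k $ ja k" for k j
    define w where "w j m = B j $ ib m $ jb m * C j $ ic m $ jc m" for j m
    define qt :: "4 \<Rightarrow> 4 \<Rightarrow> complex" where "qt m l =
       (if m = 1 then (if l = 1 \<or> l = 2 then 1 else 0)
        else if m = 2 then (if l = 1 then 1 else if l = 2 then -1 else 0)
        else if m = 3 then (if l = 3 then 1 else if l = 4 then -1 else 0)
        else (if l = 3 \<or> l = 4 then 1 else 0))" for m l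
    define Q :: "complex^4^4" where "Q = (\<chi> m l. complex_of_real (sqrt 2) / 2 * qt m l)"
    have aw: "(\<Sum>j<3. a k j * w j m) = Umat (ia k, ib m, ic m) (ja k, jb m, jc m)" for k m
      by (simp add: dec3 a_def w_def tensor3_def mult.assoc)
    have s2: "complex_of_real (1 / sqrt 2) * (complex_of_real (sqrt 2) / 2) = 1/2"
      by (simp flip: of_real_mult)
    have "(\<Sum>m\<in>UNIV. (\<Sum>j<3. a k j * w j m) * Q$m$l) = (if k = l then 1 else 0)" for k l
      unfolding aw
      using exhaust_4[of k] exhaust_4[of l]
      apply (elim disjE)
      apply (simp_all add: sum_4 Q_def qt_def Umat_def tensor3_def ia_def ja_def ib_def jb_def ic_def jc_def
           S0_def S1_def S2_def S3_def I2_def sigma1_def sigma2_def sigma3_def mat2_def algebra_simps s2)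
      done
    thus False by (rule no_rank3)
  qed
qed

end
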